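(* Let $C_1,C_2\subseteq\mathbb{F}_q^n$ be linear codes such that $(C_1,C_2)$ is $\rho$-product-expanding, and let $C_1'\subseteq C_1$ be a linear subcode of codimension 1. Then $(C_1',C_2)$ is $\rho^2/2$-product-expanding.
   Context: A pair of linear codes $C_1,C_2\subseteq\mathbb{F}_q^n$ is $\rho$-product-expanding if every $x\in C_1\otimes\mathbb{F}_q^n+\mathbb{F}_q^n\otimes C_2$ (an $n\times n$ matrix) can be written as $x=c+r$ with $c\in C_1\otimes\mathbb{F}_q^n$ (all columns in $C_1$) and $r\in\mathbb{F}_q^n\otimes C_2$ (all rows in $C_2$) such that $|x|\ge\rho n(|c|_{\mathrm{col}}+|r|_{\mathrm{row}})$, where $|x|$ is the number of nonzero entries, $|c|_{\mathrm{col}}$ the number of nonzero columns of $c$, and $|r|_{\mathrm{row}}$ the number of nonzero rows of $r$. *)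

theory Defs
  imports "HOL-Analysis.Analysis"
begin

text \<open>Vectors in F_q^n are elements of 'a ^ 'n (index type 'n with CARD('n) = n);
  an n x n matrix x is an element of 'a ^ 'n ^ 'n with entry x $ i $ j in row i, column j.
  A linear code is a subspace (vec.subspace) of 'a ^ 'n.\<close>

definition col :: "'a ^ 'n ^ 'm \<Rightarrow> 'n \<Rightarrow> 'a ^ 'm" where
  "col x j = (\<chi> i. x $ i $ j)"

definition col_code :: "('a ^ 'n) set \<Rightarrow> ('a ^ 'n ^ 'n) set" where
  "col_code C = {x. \<forall>j. col x j \<in> C}"

definition row_code :: "('a ^ 'n) set \<Rightarrow> ('a ^ 'n ^ 'n) set" where
  "row_code C = {x. \<forall>i. x $ i \<in> C}"

definition hweight :: "'a::zero ^ 'n ^ 'n \<Rightarrow> nat" where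
  "hweight x = card {(i, j). x $ i $ j \<noteq> 0}"

definition col_weight :: "'a::zero ^ 'n ^ 'n \<Rightarrow> nat" where
  "col_weight x = card {j. \<exists>i. x $ i $ j \<noteq> 0}"

definition row_weight :: "'a::zero ^ 'n ^ 'n \<Rightarrow> nat" where
  "row_weight x = card {i. x $ i \<noteq> 0}"

definition product_expanding ::
    "real \<Rightarrow> ('a::field ^ 'n::finite) set \<Rightarrow> ('a ^ 'n) set \<Rightarrow> bool" where
  "product_expanding \<rho> C1 C2 \<longleftrightarrow>
     (\<forall>x \<in> {c + r | c r. c \<in> col_code C1 \<and> r \<in> row_code C2}.
        \<exists>c r. c \<in> col_code C1 \<and> r \<in> row_code C2 \<and> x = c + r \<and>
          real (hweight x) \<ge> \<rho> * real CARD('n) * real (col_weight c + row_weight r))"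

end

theory Submission
  imports Defs
begin

lemma arith1:
  fixes \<rho> N S S2 h :: real
  assumes "0<\<rho>" "\<rho>\<le>1" "0\<le>N" "0\<le>S" "S2 \<le> S + N" "\<rho>*N*S \<le> h" "\<rho>*N*(\<rho>*N) \<le> h"
  shows "\<rho>\<^sup>2/2*N*S2 \<le> h"
proof -
  have "\<rho>\<^sup>2/2*N*S2 \<le> \<rho>\<^sup>2/2*N*(S+N)"
    using assms by (intro mult_left_mono) auto
  also have "\<dots> = \<rho>*(\<rho>*N*S)/2 + \<rho>*N*(\<rho>*N)/2" by (simp add: power2_eq_square algebra_simps)
  also have "\<rho>*(\<rho>*N*S) \<le> \<rho>*N*S"
  proof -
    have h0: "0 \<le> \<rho>*N*S" using assms by (intro mult_nonneg_nonneg) auto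
    show ?thesis by (rule mult_left_le_one_le[OF h0]) (use assms in auto)
  qed
  finally show ?thesis using assms by linarith
qed

lemma arith2:
  fixes \<rho> N S h :: real
  assumes "0<\<rho>" "0\<le>N" "0\<le>S" "\<rho>*N*S \<le> h" "h \<le> N*S"
  shows "\<rho>\<^sup>2/2*N*S \<le> h"
proof (cases "N*S = 0")
  case True
  have "\<rho>\<^sup>2/2*N*S = 0" "\<rho>*N*S = 0" using True by auto
  then show ?thesis using assms(4) by linarith
next
  case False
  then have p: "N*S > 0" using assms by (simp add: order_less_le)
  have "\<rho> * (N*S) \<le> 1 * (N*S)" using assms by (simp add: mult.assoc)
  then have r1: "\<rho> \<le> 1" using p mult_le_cancel_right_pos[of "N*S" \<rho> 1] by simp
  have "\<rho>\<^sup>2/2*N*S = (\<rho>/2) * (\<rho>*N*S)" by (simp add: power2_eq_square)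
  also have "\<dots> \<le> 1 * (\<rho>*N*S)" using r1 assms p
    by (intro mult_right_mono) (auto simp: mult.assoc)
  finally show ?thesis using assms by simp
qed

lemma lin_comp:
  fixes g :: "'a::field ^ 'n \<Rightarrow> 'a ^ 'm"
  assumes "Vector_Spaces.linear (*s) (*s) g"
  shows "g y $ k = (\<Sum>i\<in>UNIV. y$i * g (axis i 1) $ k)"
proof -
  have "g y = g (\<Sum>i\<in>UNIV. y$i *s axis i 1)" by (simp add: basis_expansion)
  also have "\<dots> = (\<Sum>i\<in>UNIV. y$i *s g (axis i 1))"
    using assms by (simp add: vec.linear_sum vec.linear_scale)
  finally show ?thesis by (simp add: sum_component)
qed

lemma functional_exists:
  fixes C :: "('a::field ^ 'n::finite) set"
  assumes "vec.subspace C" "u \<notin> C"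
  shows "\<exists>a::'a^'n. (\<forall>v\<in>C. (\<Sum>i\<in>UNIV. a$i * v$i) = 0) \<and> (\<Sum>i\<in>UNIV. a$i * u$i) = 1"
proof -
  obtain B where B: "B \<subseteq> C" "vec.independent B" "C \<subseteq> vec.span B"
    by (rule vec.basis_exists)
  have sB: "vec.span B = C" using vec.span_minimal[OF B(1) assms(1)] B(3) by blast
  have ind: "vec.independent (insert u B)"
    using B(2) assms(2) unfolding sB[symmetric] by (rule vec.independent_insertI[rotated])
  fix k :: 'n
  obtain g where g: "Vector_Spaces.linear (*s) (*s) g"
    "\<forall>x\<in>insert u B. g x = (if x = u then (axis k 1 :: 'a^'n) else 0)"
    using vec.linear_independent_extend[OF ind, of "\<lambda>x. if x = u then (axis k 1 :: 'a^'n) else 0"] by blast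
  define a where "a = (\<chi> i. g (axis i 1) $ k)"
  have rep: "(\<Sum>i\<in>UNIV. a$i * y$i) = g y $ k" for y
    unfolding lin_comp[OF g(1), of y k] a_def by (simp add: mult.commute)
  have gB: "\<forall>x\<in>B. g x = 0"
  proof
    fix x assume "x \<in> B"
    then have "x \<noteq> u" using B(1) assms(2) by blast
    then show "g x = 0" using g(2) \<open>x \<in> B\<close> by simp
  qed
  have gC: "g v = 0" if "v \<in> C" for v
    using vec.linear_eq_0_on_span[OF g(1), of B v] gB that sB by blast
  have gu: "g u = axis k 1" using g(2) by simp
  show ?thesis
  proof (intro exI[of _ a] conjI ballI)
    fix v assume "v \<in> C" then show "(\<Sum>i\<in>UNIV. a$i * v$i) = 0" using rep gC by simp
  next
    show "(\<Sum>i\<in>UNIV. a$i * u$i) = 1" using rep gu by simp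
  qed
qed

lemma decomp_exists:
  fixes C1 C1' :: "('a::field ^ 'n::finite) set"
  assumes "vec.subspace C1" "vec.subspace C1'" "C1' \<subseteq> C1" "vec.dim C1' + 1 = vec.dim C1"
  shows "\<exists>u\<in>C1. u \<notin> C1' \<and> (\<forall>v\<in>C1. \<exists>k. v - k *s u \<in> C1')"
proof -
  have "C1' \<noteq> C1" using assms(4) by auto
  then obtain u where u: "u \<in> C1" "u \<notin> C1'" using assms(3) by blast
  have sp: "vec.span C1' = C1'" using assms(2) by simp
  have nu: "u \<notin> vec.span C1'" by (subst sp) (rule u(2))
  have "vec.dim (insert u C1') = vec.dim C1' + 1"
    by (simp add: vec.dim_insert nu)
  then have d: "vec.dim (vec.span (insert u C1')) = vec.dim C1" using assms(4) by simp
  have sub: "vec.span (insert u C1') \<subseteq> C1" using u assms by (intro vec.span_minimal) auto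
  have eq: "vec.span (insert u C1') = C1"
    using vec.subspace_dim_equal[OF vec.subspace_span assms(1) sub] d by simp
  show ?thesis
  proof (intro bexI[OF _ u(1)] conjI ballI)
    show "u \<notin> C1'" by fact
    fix v assume "v \<in> C1"
    then have "v \<in> vec.span (insert u C1')" using eq by simp
    then show "\<exists>k. v - k *s u \<in> C1'" unfolding vec.span_insert sp by simp
  qed
qed

lemma supp_zero:
  fixes c :: "'a::zero ^ 'n::finite ^ 'n"
  shows "col_weight c = 0 \<Longrightarrow> c = 0" "row_weight c = 0 \<Longrightarrow> c = 0"
  unfolding col_weight_def row_weight_def by (auto simp: vec_eq_iff)

lemma hweight_le:
  fixes x c r :: "'a::ab_group_add ^ 'n::finite ^ 'n"
  assumes "x = c + r"
  shows "hweight x \<le> CARD('n) * (col_weight c + row_weight r)"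
proof -
  have "{(i, j). x $ i $ j \<noteq> 0} \<subseteq> (UNIV \<times> {j. \<exists>i. c $ i $ j \<noteq> 0}) \<union> ({i. r $ i \<noteq> 0} \<times> UNIV)"
    using assms by (auto simp: vec_eq_iff)
  then have "hweight x \<le> card ((UNIV \<times> {j. \<exists>i. c $ i $ j \<noteq> 0}) \<union> ({i. r $ i \<noteq> 0} \<times> (UNIV::'n set)))"
    unfolding hweight_def by (intro card_mono) auto
  also have "\<dots> \<le> card ((UNIV::'n set) \<times> {j. \<exists>i. c $ i $ j \<noteq> 0}) + card ({i. r $ i \<noteq> 0} \<times> (UNIV::'n set))"
    by (rule card_Un_le)
  also have "\<dots> = CARD('n) * (col_weight c + row_weight r)"
    by (simp add: card_cartesian_product col_weight_def row_weight_def algebra_simps)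
  finally show ?thesis .
qed

lemma dist_bound:
  fixes C1 C2 :: "('a::field ^ 'n::finite) set"
  assumes "0 < \<rho>" "vec.subspace C1" "vec.subspace C2" "product_expanding \<rho> C1 C2"
    and "w \<in> C2" "w \<noteq> 0"
  shows "\<rho> * real CARD('n) \<le> real (card {j. w $ j \<noteq> 0})"
proof -
  fix i0 :: 'n
  define R :: "'a ^ 'n ^ 'n" where "R = (\<chi> i. if i = i0 then w else 0)"
  have R0: "0 \<in> col_code C1" using assms(2) by (simp add: col_code_def col_def vec.subspace_0 zero_vec_def[symmetric])
  have R1: "R \<in> row_code C2" using assms(3,5) by (simp add: row_code_def R_def vec.subspace_0)
  have "R \<in> {c + r |c r. c \<in> col_code C1 \<and> r \<in> row_code C2}"
    using R0 R1 by (intro CollectI exI[of _ 0] exI[of _ R]) auto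
  from bspec[OF assms(4)[unfolded product_expanding_def] this]
  obtain c0 r0 where cr: "c0 \<in> col_code C1" "r0 \<in> row_code C2" "R = c0 + r0"
    "\<rho> * real CARD('n) * real (col_weight c0 + row_weight r0) \<le> real (hweight R)"
    by blast
  have "{(i, j). R $ i $ j \<noteq> 0} = Pair i0 ` {j. w $ j \<noteq> 0}"
    by (auto simp: R_def split: if_splits)
  then have hR: "hweight R = card {j. w $ j \<noteq> 0}"
    unfolding hweight_def by (simp add: card_image inj_on_def)
  have "col_weight c0 + row_weight r0 \<noteq> 0"
  proof
    assume "col_weight c0 + row_weight r0 = 0"
    then have "c0 = 0" "r0 = 0" using supp_zero by auto
    then have "R $ i0 = 0" using cr(3) by simp
    then show False using assms(6) by (simp add: R_def)
  qed
  then have "\<rho> * real CARD('n) * 1 \<le> \<rho> * real CARD('n) * real (col_weight c0 + row_weight r0)"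
    using assms(1) by (intro mult_left_mono) auto
  then show ?thesis using cr(4) hR by simp
qed


theorem lemma5p5:
  fixes C1 C1' C2 :: "('a::{field,finite} ^ 'n::finite) set" and \<rho> :: real
  assumes "0 < \<rho>"
    and "vec.subspace C1" and "vec.subspace C2" and "vec.subspace C1'"
    and "C1' \<subseteq> C1" and "vec.dim C1' + 1 = vec.dim C1"
    and "product_expanding \<rho> C1 C2"
  shows "product_expanding (\<rho>\<^sup>2 / 2) C1' C2"
proof -
  obtain u where u: "u \<in> C1" "u \<notin> C1'" and uk: "\<And>v. v \<in> C1 \<Longrightarrow> \<exists>k. v - k *s u \<in> C1'"
    using decomp_exists[OF assms(2,4,5,6)] by blast
  obtain a :: "'a^'n" where a0: "\<And>v. v \<in> C1' \<Longrightarrow> (\<Sum>i\<in>UNIV. a$i * v$i) = 0"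
    and a1: "(\<Sum>i\<in>UNIV. a$i * u$i) = 1"
    using functional_exists[OF assms(4) u(2)] by blast
  define phi where "phi v = (\<Sum>i\<in>UNIV. a$i * v$i)" for v :: "'a^'n"
  have phi_diff: "phi (v - k *s u) = phi v - k" for v k
  proof -
    have "phi (v - k *s u) = phi v - k * (\<Sum>i\<in>UNIV. a$i * u$i)"
      unfolding phi_def by (simp add: right_diff_distrib sum_subtractf sum_distrib_left mult.left_commute)
    then show ?thesis using a1 by simp
  qed
  have phi_add: "phi (v + v') = phi v + phi v'" for v v'
    by (simp add: phi_def sum.distrib algebra_simps)
  have phi0: "phi 0 = 0" by (simp add: phi_def)
  have key: "v - phi v *s u \<in> C1'" if vC: "v \<in> C1" for v
  proof -
    obtain k where k: "v - k *s u \<in> C1'" using uk[OF vC] by blast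
    then have "phi v = k" using a0[OF k] phi_diff[of v k] by (simp add: phi_def)
    then show ?thesis using k by simp
  qed
  have colC2: "(\<chi> j. phi (col m j)) \<in> C2" if "m \<in> row_code C2" for m
  proof -
    have "(\<chi> j. phi (col m j)) = (\<Sum>i\<in>UNIV. a$i *s m$i)"
      by (simp add: vec_eq_iff phi_def col_def sum_component)
    also have "\<dots> \<in> C2" using that assms(3)
      by (intro vec.subspace_sum vec.subspace_scale) (auto simp: row_code_def)
    finally show ?thesis .
  qed
  have n0: "0 < real CARD('n)" by simp
  show ?thesis unfolding product_expanding_def
  proof (intro ballI)
    fix x assume "x \<in> {c + r |c r. c \<in> col_code C1' \<and> r \<in> row_code C2}"
    then obtain c' r' where cr': "c' \<in> col_code C1'" "r' \<in> row_code C2" "x = c' + r'" by blast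
    have "c' \<in> col_code C1" using cr'(1) assms(5) by (auto simp: col_code_def)
    then have "x \<in> {c + r |c r. c \<in> col_code C1 \<and> r \<in> row_code C2}" using cr' by blast
    from bspec[OF assms(7)[unfolded product_expanding_def] this]
    obtain c r where cr: "c \<in> col_code C1" "r \<in> row_code C2" "x = c + r"
      and bnd: "\<rho> * real CARD('n) * real (col_weight c + row_weight r) \<le> real (hweight x)"
      by blast
    have hle: "real (hweight x) \<le> real CARD('n) * real (col_weight c + row_weight r)"
      using hweight_le[OF cr(3)] by (simp only: of_nat_mult[symmetric] of_nat_le_iff)
    define w where "w = (\<chi> j. phi (col c j))"
    define m where "m = r' - r"
    have m: "m \<in> row_code C2" using cr'(2) cr(2) assms(3)
      by (auto simp: m_def row_code_def vec.subspace_diff)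
    have cm: "c = m + c'" using cr(3) cr'(3) by (simp add: m_def algebra_simps)
    have "w = (\<chi> j. phi (col m j))"
    proof -
      have "phi (col c j) = phi (col m j)" for j
      proof -
        have "col c j = col m j + col c' j" by (simp add: cm col_def vec_eq_iff)
        moreover have "phi (col c' j) = 0"
          using a0 cr'(1) by (simp add: col_code_def phi_def)
        ultimately show ?thesis by (simp add: phi_add)
      qed
      then show ?thesis by (simp add: w_def)
    qed
    then have wC2: "w \<in> C2" using colC2[OF m] by simp
    show "\<exists>c r. c \<in> col_code C1' \<and> r \<in> row_code C2 \<and> x = c + r \<and>
          \<rho>\<^sup>2 / 2 * real CARD('n) * real (col_weight c + row_weight r) \<le> real (hweight x)"
    proof (cases "w = 0")
      case True
      have "c \<in> col_code C1'"
        unfolding col_code_def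
      proof (intro CollectI allI)
        fix j
        have "phi (col c j) = 0" using True by (simp add: w_def vec_eq_iff)
        then show "col c j \<in> C1'" using key[of "col c j"] cr(1) by (simp add: col_code_def)
      qed
      moreover have "\<rho>\<^sup>2 / 2 * real CARD('n) * real (col_weight c + row_weight r) \<le> real (hweight x)"
        using arith2[OF assms(1) _ _ bnd hle] by simp
      ultimately show ?thesis using cr by blast
    next
      case False
      define U :: "'a^'n^'n" where "U = (\<chi> i j. u$i * w$j)"
      have c2: "c - U \<in> col_code C1'"
        unfolding col_code_def
      proof (intro CollectI allI)
        fix j
        have "col (c - U) j = col c j - phi (col c j) *s u"
          by (simp add: col_def U_def w_def vec_eq_iff mult.commute)
        then show "col (c - U) j \<in> C1'" using key[of "col c j"] cr(1) by (simp add: col_code_def)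
      qed
      have r2: "r + U \<in> row_code C2"
        unfolding row_code_def
      proof (intro CollectI allI)
        fix i
        have "(r + U) $ i = r $ i + u$i *s w" by (simp add: U_def vec_eq_iff)
        then show "(r + U) $ i \<in> C2" using cr(2) wC2 assms(3)
          by (simp add: row_code_def vec.subspace_add vec.subspace_scale)
      qed
      have xeq: "x = (c - U) + (r + U)" using cr(3) by simp
      have cw: "col_weight (c - U) \<le> col_weight c"
        unfolding col_weight_def
      proof (intro card_mono)
        show "{j. \<exists>i. (c - U) $ i $ j \<noteq> 0} \<subseteq> {j. \<exists>i. c $ i $ j \<noteq> 0}"
        proof
          fix j assume "j \<in> {j. \<exists>i. (c - U) $ i $ j \<noteq> 0}"
          then obtain i where i: "(c - U) $ i $ j \<noteq> 0" by blast
          show "j \<in> {j. \<exists>i. c $ i $ j \<noteq> 0}"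
          proof (rule ccontr)
            assume "j \<notin> {j. \<exists>i. c $ i $ j \<noteq> 0}"
            then have "col c j = 0" by (simp add: col_def vec_eq_iff)
            then have "w $ j = 0" using phi0 by (simp add: w_def)
            then show False using i \<open>col c j = 0\<close> by (simp add: U_def col_def vec_eq_iff)
          qed
        qed
      qed simp
      have rw: "row_weight (r + U) \<le> CARD('n)"
        unfolding row_weight_def by (rule card_mono) auto
      have wsub: "{j. w $ j \<noteq> 0} \<subseteq> {j. \<exists>i. c $ i $ j \<noteq> 0}"
      proof
        fix j assume "j \<in> {j. w $ j \<noteq> 0}"
        then have "col c j \<noteq> 0" using phi0 by (auto simp: w_def)
        then show "j \<in> {j. \<exists>i. c $ i $ j \<noteq> 0}" by (auto simp: col_def vec_eq_iff)
      qed
      have "card {j. w $ j \<noteq> 0} \<le> col_weight c"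
        unfolding col_weight_def by (rule card_mono[OF _ wsub]) simp
      then have dw: "\<rho> * real CARD('n) \<le> real (col_weight c)"
        using dist_bound[OF assms(1,2,3,7) wC2 False] by linarith
      have "\<rho> * real CARD('n) * (\<rho> * real CARD('n)) \<le> \<rho> * real CARD('n) * real (col_weight c)"
        using dw assms(1) by (intro mult_left_mono) auto
      also have "\<dots> \<le> \<rho> * real CARD('n) * real (col_weight c + row_weight r)"
        using assms(1) by (intro mult_left_mono) auto
      also have "\<dots> \<le> real (hweight x)" by (rule bnd)
      finally have sq: "\<rho> * real CARD('n) * (\<rho> * real CARD('n)) \<le> real (hweight x)" .
      have pos: "0 < \<rho> * real CARD('n)" using assms(1) by simp
      have r1: "\<rho> \<le> 1"
      proof -
        have A: "\<rho> * (real CARD('n) * real (col_weight c + row_weight r))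
              \<le> 1 * (real CARD('n) * real (col_weight c + row_weight r))"
          using bnd hle by (simp only: mult.assoc mult_1_left)
        moreover have "0 < real CARD('n) * real (col_weight c + row_weight r)"
          using dw pos n0 by (intro mult_pos_pos) auto
        ultimately show ?thesis
          using mult_le_cancel_right_pos by blast
      qed
      have "\<rho>\<^sup>2 / 2 * real CARD('n) * real (col_weight (c - U) + row_weight (r + U)) \<le> real (hweight x)"
        using arith1[OF assms(1) r1 _ _ _ bnd sq] cw rw by simp
      then show ?thesis using c2 r2 xeq by blast
    qed
  qed
qed

end
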